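(* For every $n\equiv 9 \pmod{16}$ (with $n\geq 9$), there exists an almost 2-perfect maximum 8-cycle packing of $K_n$.
   Context: An 8-cycle packing of $K_n$ on vertex set $\mathcal{X}$ is a triple $(\mathcal{X},\mathcal{C},\mathcal{L})$ with $\mathcal{C}$ a collection of pairwise edge-disjoint 8-cycles of $K_n$ and leave $\mathcal{L}$ the set of edges in no cycle of $\mathcal{C}$; it is maximum if $|\mathcal{L}|$ is minimum among all 8-cycle packings of $K_n$. For an 8-cycle $C$, an inside 8-cycle of $C$ is an 8-cycle on the same vertex set sharing no edge with $C$. The packing is almost 2-perfect if one can choose for each $C\in\mathcal{C}$ an inside 8-cycle $C'$ such that $(\mathcal{X},\{C'\},\mathcal{L})$ is again an 8-cycle packing with the same leave. *)

theory Defs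
  imports Main
begin

definition complete_edges :: "'a set \<Rightarrow> 'a set set" where
  "complete_edges X = {{x, y} | x y. x \<in> X \<and> y \<in> X \<and> x \<noteq> y}"

definition cycle_edges :: "'a list \<Rightarrow> 'a set set" where
  "cycle_edges vs = {{vs ! i, vs ! ((i + 1) mod length vs)} | i. i < length vs}"

definition is_8cycle :: "'a set \<Rightarrow> 'a set set \<Rightarrow> bool" where
  "is_8cycle X c \<longleftrightarrow>
     (\<exists>vs. length vs = 8 \<and> distinct vs \<and> set vs \<subseteq> X \<and> c = cycle_edges vs)"

definition cyc_vertices :: "'a set set \<Rightarrow> 'a set" where
  "cyc_vertices c = \<Union> c"

definition cycle8_packing :: "'a set \<Rightarrow> 'a set set set \<Rightarrow> 'a set set \<Rightarrow> bool" where
  "cycle8_packing X C L \<longleftrightarrow>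
     (\<forall>c\<in>C. is_8cycle X c) \<and>
     (\<forall>c1\<in>C. \<forall>c2\<in>C. c1 \<noteq> c2 \<longrightarrow> c1 \<inter> c2 = {}) \<and>
     L = complete_edges X - \<Union> C"

definition max_cycle8_packing :: "'a set \<Rightarrow> 'a set set set \<Rightarrow> 'a set set \<Rightarrow> bool" where
  "max_cycle8_packing X C L \<longleftrightarrow>
     cycle8_packing X C L \<and>
     (\<forall>C' L'. cycle8_packing X C' L' \<longrightarrow> card L \<le> card L')"

definition inside_8cycle :: "'a set \<Rightarrow> 'a set set \<Rightarrow> 'a set set \<Rightarrow> bool" where
  "inside_8cycle X c c' \<longleftrightarrow>
     is_8cycle X c' \<and> cyc_vertices c' = cyc_vertices c \<and> c \<inter> c' = {}"

definition almost_2_perfect :: "'a set \<Rightarrow> 'a set set set \<Rightarrow> 'a set set \<Rightarrow> bool" where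
  "almost_2_perfect X C L \<longleftrightarrow>
     (\<exists>f. inj_on f C \<and> (\<forall>c\<in>C. inside_8cycle X c (f c)) \<and> cycle8_packing X (f ` C) L)"

end

theory Submission
  imports Defs
begin

definition ep :: "nat list \<Rightarrow> (nat \<times> nat) list" where
  "ep vs = map (\<lambda>i. (min (vs!i) (vs!((i+1) mod length vs)), max (vs!i) (vs!((i+1) mod length vs)))) [0..<length vs]"

definition tok :: "(nat list \<times> nat list) list \<Rightarrow> nat \<Rightarrow> (nat \<times> nat) list \<Rightarrow> bool" where
  "tok T N P \<longleftrightarrow>
    list_all (\<lambda>(vs,ws). length vs = 8 \<and> length ws = 8 \<and> distinct vs \<and> distinct ws \<and>
       list_all (\<lambda>v. v < N) vs \<and> set ws = set vs \<and> list_all (\<lambda>e. e \<notin> set (ep ws)) (ep vs)) T \<and>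
    (\<forall>i<length T. \<forall>j<length T. i \<noteq> j \<longrightarrow>
        list_all (\<lambda>e. e \<notin> set (ep (fst (T!j)))) (ep (fst (T!i))) \<and>
        list_all (\<lambda>e. e \<notin> set (ep (snd (T!j)))) (ep (snd (T!i)))) \<and>
    set (concat (map (ep \<circ> fst) T)) = set P \<and> set (concat (map (ep \<circ> snd) T)) = set P"

definition allpairs :: "nat \<Rightarrow> (nat \<times> nat) list" where
  "allpairs N = concat (map (\<lambda>b. map (\<lambda>a. (a,b)) [0..<b]) [0..<N])"

definition K9P :: "nat \<Rightarrow> nat \<Rightarrow> bool" where
  "K9P a b \<longleftrightarrow> a < b \<and> b \<le> 8 \<and> \<not> (1 \<le> a \<and> b \<le> 4 \<and> (b - a = 1 \<or> b - a = 3))"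
definition U2P :: "nat \<Rightarrow> nat \<Rightarrow> bool" where
  "U2P a b \<longleftrightarrow> a < 4 \<and> 4 \<le> b \<and> b < 8"
definition U3P :: "nat \<Rightarrow> nat \<Rightarrow> bool" where
  "U3P a b \<longleftrightarrow> a < b \<and> b < 8 \<and> ((a < 4 \<and> 4 \<le> b) \<or> (b < 4 \<and> (b - a = 1 \<or> b - a = 3)) \<or> (4 \<le> a \<and> (b - a = 1 \<or> b - a = 3)))"

definition TK9 :: "(nat list \<times> nat list) list" where
  "TK9 = [([0, 1, 8, 2, 6, 7, 3, 5], [0, 3, 1, 7, 2, 5, 8, 6]), ([0, 2, 4, 7, 8, 5, 6, 3], [0, 4, 6, 2, 8, 3, 5, 7]), ([0, 4, 5, 2, 7, 1, 6, 8], [0, 1, 5, 6, 7, 8, 4, 2]), ([0, 6, 4, 8, 3, 1, 5, 7], [0, 5, 4, 7, 3, 6, 1, 8])]"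
definition TU2 :: "(nat list \<times> nat list) list" where
  "TU2 = [([0,4,1,5,2,6,3,7], [0,5,3,4,2,7,1,6]), ([0,5,3,4,2,7,1,6], [0,4,1,5,2,6,3,7])]"
definition TU3 :: "(nat list \<times> nat list) list" where
  "TU3 = [([0, 1, 2, 3, 4, 5, 6, 7], [0, 3, 5, 1, 6, 2, 7, 4]), ([0, 3, 5, 1, 6, 2, 7, 4], [0, 5, 2, 4, 1, 7, 3, 6]), ([0, 5, 2, 4, 1, 7, 3, 6], [0, 1, 2, 3, 4, 5, 6, 7])]"

lemma tok_K9: "tok TK9 9 (filter (\<lambda>(a,b). K9P a b) (allpairs 9))"
  by code_simp
lemma tok_U2: "tok TU2 8 (filter (\<lambda>(a,b). U2P a b) (allpairs 8))"
  by code_simp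
lemma tok_U3: "tok TU3 8 (filter (\<lambda>(a,b). U3P a b) (allpairs 8))"
  by code_simp

lemma set_filter_allpairs:
  assumes "\<And>a b. P a b \<Longrightarrow> a < b \<and> b < N"
  shows "set (filter (\<lambda>(a,b). P a b) (allpairs N)) = {(a,b). P a b}"
proof -
  have "set (allpairs N) = {(a,b). a < b \<and> b < N}"
    unfolding allpairs_def by auto
  then show ?thesis using assms by auto
qed

definition phi :: "('b \<Rightarrow> 'a) \<Rightarrow> 'b \<times> 'b \<Rightarrow> 'a set" where
  "phi g = (\<lambda>(a,b). {g a, g b})"

lemma cycle_edges_map: "cycle_edges (map g vs) = phi g ` set (ep vs)"
proof -
  have mm: "{g (min x y), g (max x y)} = {g x, g y}" for x y :: nat
    by (cases "x \<le> y") (auto simp: min_def max_def)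
  have md: "(i+1) mod length vs < length vs" if "i < length vs" for i
    by (rule mod_less_divisor) (use that in auto)
  have md2: "Suc i mod length vs < length vs" if "i < length vs" for i
    using md[OF that] by simp
  have 1: "cycle_edges (map g vs) = (\<lambda>i. {g (vs!i), g (vs!((i+1) mod length vs))}) ` {..<length vs}"
  proof -
    have "cycle_edges (map g vs) = (\<lambda>i. {map g vs ! i, map g vs ! ((i+1) mod length vs)}) ` {..<length vs}"
      unfolding cycle_edges_def length_map by (simp add: setcompr_eq_image lessThan_def)
    also have "\<dots> = (\<lambda>i. {g (vs!i), g (vs!((i+1) mod length vs))}) ` {..<length vs}"
      by (rule image_cong) (simp_all add: md2)
    finally show ?thesis .
  qed
  have 2: "set (ep vs) = (\<lambda>i. (min (vs!i) (vs!((i+1) mod length vs)), max (vs!i) (vs!((i+1) mod length vs)))) ` {..<length vs}"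
    unfolding ep_def by auto
  show ?thesis unfolding 1 2 image_comp by (simp add: phi_def o_def mm)
qed

lemma cyc_vertices_cycle_edges: "vs \<noteq> [] \<Longrightarrow> cyc_vertices (cycle_edges vs) = set vs"
proof
  show "cyc_vertices (cycle_edges vs) \<subseteq> set vs" if "vs \<noteq> []"
    using that unfolding cyc_vertices_def cycle_edges_def by auto
  show "set vs \<subseteq> cyc_vertices (cycle_edges vs)" if "vs \<noteq> []"
  proof
    fix x assume "x \<in> set vs"
    then obtain i where "i < length vs" "vs ! i = x" by (auto simp: in_set_conv_nth)
    then show "x \<in> cyc_vertices (cycle_edges vs)"
      unfolding cyc_vertices_def cycle_edges_def by blast
  qed
qed

definition good :: "'a set \<Rightarrow> ('a set set \<times> 'a set set) set \<Rightarrow> 'a set set \<Rightarrow> bool" where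
  "good X S E \<longleftrightarrow> (\<forall>(c,d)\<in>S. is_8cycle X c \<and> inside_8cycle X c d) \<and>
     (\<forall>p\<in>S. \<forall>q\<in>S. p \<noteq> q \<longrightarrow> fst p \<inter> fst q = {} \<and> snd p \<inter> snd q = {}) \<and>
     \<Union>(fst ` S) = E \<and> \<Union>(snd ` S) = E"

lemma good_UN:
  assumes "\<And>i. i \<in> I \<Longrightarrow> good X (S i) (E i)"
    and "\<And>i j. i \<in> I \<Longrightarrow> j \<in> I \<Longrightarrow> i \<noteq> j \<Longrightarrow> E i \<inter> E j = {}"
  shows "good X (\<Union>i\<in>I. S i) (\<Union>i\<in>I. E i)"
proof -
  have A: "\<forall>(c,d)\<in>(\<Union>i\<in>I. S i). is_8cycle X c \<and> inside_8cycle X c d"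
  proof (intro ballI)
    fix x assume "x \<in> (\<Union>i\<in>I. S i)"
    then obtain i where i: "i \<in> I" "x \<in> S i" by blast
    have "\<forall>(c,d)\<in>S i. is_8cycle X c \<and> inside_8cycle X c d" using assms(1)[OF i(1)] unfolding good_def by simp
    then show "case x of (c,d) \<Rightarrow> is_8cycle X c \<and> inside_8cycle X c d" using i(2) by blast
  qed
  have B: "\<forall>p\<in>(\<Union>i\<in>I. S i). \<forall>q\<in>(\<Union>i\<in>I. S i). p \<noteq> q \<longrightarrow> fst p \<inter> fst q = {} \<and> snd p \<inter> snd q = {}"
  proof (intro ballI impI)
    fix p q assume p: "p \<in> (\<Union>i\<in>I. S i)" and q: "q \<in> (\<Union>i\<in>I. S i)" and pq: "p \<noteq> q"
    then obtain i j where i: "i \<in> I" "p \<in> S i" and j: "j \<in> I" "q \<in> S j" by blast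
    show "fst p \<inter> fst q = {} \<and> snd p \<inter> snd q = {}"
    proof (cases "i = j")
      case True then show ?thesis using assms(1)[OF i(1)] i j pq unfolding good_def by blast
    next
      case False
      have "fst p \<subseteq> E i" "snd p \<subseteq> E i" using assms(1)[OF i(1)] i unfolding good_def by blast+
      moreover have "fst q \<subseteq> E j" "snd q \<subseteq> E j" using assms(1)[OF j(1)] j unfolding good_def by blast+
      ultimately show ?thesis using assms(2)[OF i(1) j(1) False] by blast
    qed
  qed
  have Ci: "\<Union>(fst ` S i) = E i" "\<Union>(snd ` S i) = E i" if "i \<in> I" for i
    using assms(1)[OF that] unfolding good_def by simp_all
  have "\<Union>(fst ` (\<Union>i\<in>I. S i)) = (\<Union>i\<in>I. \<Union>(fst ` S i))" by blast
  also have "\<dots> = (\<Union>i\<in>I. E i)" using Ci by simp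
  finally have C1: "\<Union>(fst ` (\<Union>i\<in>I. S i)) = (\<Union>i\<in>I. E i)" .
  have "\<Union>(snd ` (\<Union>i\<in>I. S i)) = (\<Union>i\<in>I. \<Union>(snd ` S i))" by blast
  also have "\<dots> = (\<Union>i\<in>I. E i)" using Ci by simp
  finally have C2: "\<Union>(snd ` (\<Union>i\<in>I. S i)) = (\<Union>i\<in>I. E i)" .
  show ?thesis unfolding good_def by (intro conjI A B C1 C2)
qed

lemma is_8cycle_ne: "is_8cycle X c \<Longrightarrow> c \<noteq> {}"
proof -
  assume "is_8cycle X c"
  then obtain vs where "length vs = 8" "c = cycle_edges vs" unfolding is_8cycle_def by blast
  then have "{vs ! 0, vs ! ((0 + 1) mod length vs)} \<in> c" unfolding cycle_edges_def by force
  then show ?thesis by blast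
qed

lemma good_final:
  assumes g: "good X S (complete_edges X - L)" and L: "L \<subseteq> complete_edges X"
  shows "cycle8_packing X (fst ` S) L \<and> almost_2_perfect X (fst ` S) L"
proof -
  have cyc: "is_8cycle X c" "is_8cycle X d" if "(c,d) \<in> S" for c d
    using g that unfolding good_def inside_8cycle_def by auto
  have uniq1: "d1 = d2" if "(c,d1) \<in> S" "(c,d2) \<in> S" for c d1 d2
  proof (rule ccontr)
    assume "d1 \<noteq> d2"
    then have "c \<inter> c = {}" using g that unfolding good_def by fastforce
    then show False using is_8cycle_ne[OF cyc(1)[OF that(1)]] by simp
  qed
  have uniq2: "c1 = c2" if "(c1,d) \<in> S" "(c2,d) \<in> S" for c1 c2 d
  proof (rule ccontr)
    assume "c1 \<noteq> c2"
    then have "d \<inter> d = {}" using g that unfolding good_def by fastforce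
    then show False using is_8cycle_ne[OF cyc(2)[OF that(1)]] by simp
  qed
  define f where "f = (\<lambda>c. SOME d. (c,d) \<in> S)"
  have fS: "f c = d" if "(c,d) \<in> S" for c d
    unfolding f_def by (rule some_equality) (use that uniq1 in auto)
  have fimg: "f ` (fst ` S) = snd ` S"
    using fS by (force simp: image_iff)
  have inj: "inj_on f (fst ` S)"
  proof (rule inj_onI)
    fix x y assume "x \<in> fst ` S" "y \<in> fst ` S" "f x = f y"
    then obtain dx dy where "(x,dx) \<in> S" "(y,dy) \<in> S" by force
    with fS \<open>f x = f y\<close> uniq2 show "x = y" by metis
  qed
  have pk1: "cycle8_packing X (fst ` S) L"
    unfolding cycle8_packing_def
  proof (intro conjI)
    show "\<forall>c\<in>fst ` S. is_8cycle X c" using cyc by force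
    show "\<forall>c1\<in>fst ` S. \<forall>c2\<in>fst ` S. c1 \<noteq> c2 \<longrightarrow> c1 \<inter> c2 = {}"
      using g unfolding good_def by fastforce
    have "\<Union> (fst ` S) = complete_edges X - L" using g unfolding good_def by simp
    then show "L = complete_edges X - \<Union> (fst ` S)"
      using L by auto
  qed
  have pk2: "cycle8_packing X (f ` fst ` S) L"
    unfolding cycle8_packing_def fimg
  proof (intro conjI)
    show "\<forall>c\<in>snd ` S. is_8cycle X c" using cyc by force
    show "\<forall>c1\<in>snd ` S. \<forall>c2\<in>snd ` S. c1 \<noteq> c2 \<longrightarrow> c1 \<inter> c2 = {}"
      using g unfolding good_def by fastforce
    have "\<Union> (snd ` S) = complete_edges X - L" using g unfolding good_def by simp
    then show "L = complete_edges X - \<Union> (snd ` S)"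
      using L by auto
  qed
  have ins: "\<forall>c\<in>fst ` S. inside_8cycle X c (f c)"
    using g fS unfolding good_def by fastforce
  show ?thesis using pk1 pk2 ins inj unfolding almost_2_perfect_def by blast
qed

lemma phi_inj:
  fixes g :: "nat \<Rightarrow> 'a" and N :: nat
  assumes "inj_on g {..<N}"
  shows "inj_on (phi g) {(a,b). a < b \<and> b < N}"
proof (rule inj_onI)
  fix p q assume p: "p \<in> {(a,b). a < b \<and> b < N}" and q: "q \<in> {(a,b). a < b \<and> b < N}"
    and e: "phi g p = phi g q"
  obtain a b where ab: "p = (a,b)" "a < b" "b < N" using p by auto
  obtain a' b' where ab': "q = (a',b')" "a' < b'" "b' < N" using q by auto
  have "{g a, g b} = {g a', g b'}" using e ab ab' by (simp add: phi_def)
  then have "(g a = g a' \<and> g b = g b') \<or> (g a = g b' \<and> g b = g a')" by (auto simp: doubleton_eq_iff)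
  moreover have iff: "x < N \<Longrightarrow> y < N \<Longrightarrow> (g x = g y) = (x = y)" for x y
    using inj_on_eq_iff[OF assms] by simp
  moreover have lt: "a < N \<and> b < N \<and> a' < N \<and> b' < N" using ab(2,3) ab'(2,3) by linarith
  ultimately have "(a = a' \<and> b = b') \<or> (a = b' \<and> b = a')"
    by (simp add: iff)
  then show "p = q" using ab ab' by auto
qed

lemma ep_D:
  assumes "length vs = 8" "distinct vs" "\<forall>v\<in>set vs. v < N"
  shows "set (ep vs) \<subseteq> {(a,b). a < b \<and> b < N}"
proof
  fix e assume "e \<in> set (ep vs)"
  then obtain i where i: "i < 8" and e: "e = (min (vs!i) (vs!((i+1) mod 8)), max (vs!i) (vs!((i+1) mod 8)))"
    using assms(1) unfolding ep_def by auto
  have j: "(i+1) mod 8 < 8" by simp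
  have "i \<noteq> (i+1) mod 8" using i by (cases "i = 7") auto
  then have ne: "vs!i \<noteq> vs!((i+1) mod 8)"
    using assms(1,2) i j by (simp add: nth_eq_iff_index_eq)
  have "vs!i < N" "vs!((i+1) mod 8) < N" using assms i j by auto
  then show "e \<in> {(a,b). a < b \<and> b < N}" using ne e by (auto simp: min_def max_def)
qed

lemma inst_good:
  assumes tk: "tok T N P" and inj: "inj_on g {..<N}" and gX: "g ` {..<N} \<subseteq> X"
  shows "good X ((\<lambda>(vs,ws). (cycle_edges (map g vs), cycle_edges (map g ws))) ` set T) (phi g ` set P)"
proof -
  define D where "D = {(a,b). a < b \<and> b < N}"
  define F where "F = (\<lambda>(vs,ws). (cycle_edges (map g vs), cycle_edges (map g ws)))"
  have injD: "inj_on (phi g) D" unfolding D_def by (rule phi_inj[OF inj])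
  have props: "length vs = 8 \<and> length ws = 8 \<and> distinct vs \<and> distinct ws \<and> (\<forall>v\<in>set vs. v < N)
       \<and> set ws = set vs \<and> set (ep vs) \<inter> set (ep ws) = {}" if "(vs,ws) \<in> set T" for vs ws
    using tk that unfolding tok_def list_all_iff by fastforce
  have epD: "set (ep vs) \<subseteq> D" "set (ep ws) \<subseteq> D" if "(vs,ws) \<in> set T" for vs ws
    using ep_D[of vs N] ep_D[of ws N] props[OF that] unfolding D_def by simp_all
  have cyc8: "is_8cycle X (cycle_edges (map g us))"
    if "length us = 8" "distinct us" "\<forall>v\<in>set us. v < N" for us
  proof -
    have "inj_on g (set us)" by (rule inj_on_subset[OF inj]) (use that(3) in auto)
    then have "distinct (map g us)" using that(2) by (simp add: distinct_map)
    moreover have "set (map g us) \<subseteq> X" using gX that(3) by auto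
    ultimately show ?thesis unfolding is_8cycle_def using that(1) by (intro exI[of _ "map g us"]) simp
  qed
  have disj: "phi g ` A \<inter> phi g ` B = {}" if "A \<subseteq> D" "B \<subseteq> D" "A \<inter> B = {}" for A B
  proof -
    have "phi g ` A \<inter> phi g ` B = phi g ` (A \<inter> B)"
      by (rule inj_on_image_Int[OF injD that(1,2), symmetric])
    then show ?thesis using that(3) by simp
  qed
  have P1: "\<forall>(c,d)\<in>F ` set T. is_8cycle X c \<and> inside_8cycle X c d"
  proof (clarsimp simp: F_def)
    fix vs ws assume t: "(vs,ws) \<in> set T"
    note pr = props[OF t]
    have c1: "is_8cycle X (cycle_edges (map g vs))" using pr cyc8 by blast
    have c2: "is_8cycle X (cycle_edges (map g ws))" using pr cyc8 by simp
    have "vs \<noteq> []" "ws \<noteq> []" using pr by auto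
    then have v: "cyc_vertices (cycle_edges (map g ws)) = cyc_vertices (cycle_edges (map g vs))"
      using pr by (simp add: cyc_vertices_cycle_edges)
    have "cycle_edges (map g vs) \<inter> cycle_edges (map g ws) = {}"
      unfolding cycle_edges_map using disj epD[OF t] pr by blast
    then show "is_8cycle X (cycle_edges (map g vs)) \<and> inside_8cycle X (cycle_edges (map g vs)) (cycle_edges (map g ws))"
      using c1 c2 v unfolding inside_8cycle_def by blast
  qed
  have P2: "\<forall>p\<in>F ` set T. \<forall>q\<in>F ` set T. p \<noteq> q \<longrightarrow> fst p \<inter> fst q = {} \<and> snd p \<inter> snd q = {}"
  proof (intro ballI impI)
    fix p q assume p: "p \<in> F ` set T" and q: "q \<in> F ` set T" and pq: "p \<noteq> q"
    obtain i where i: "i < length T" "p = F (T!i)" using p by (auto simp: in_set_conv_nth)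
    obtain j where j: "j < length T" "q = F (T!j)" using q by (auto simp: in_set_conv_nth)
    have ij: "i \<noteq> j" using i j pq by auto
    have d: "set (ep (fst (T!i))) \<inter> set (ep (fst (T!j))) = {}" "set (ep (snd (T!i))) \<inter> set (ep (snd (T!j))) = {}"
      using tk i(1) j(1) ij unfolding tok_def list_all_iff by blast+
    have ti: "(fst (T!i), snd (T!i)) \<in> set T" using i(1) by simp
    have tj: "(fst (T!j), snd (T!j)) \<in> set T" using j(1) by simp
    have fi: "p = (phi g ` set (ep (fst (T!i))), phi g ` set (ep (snd (T!i))))"
      using i(2) unfolding F_def by (simp add: case_prod_beta cycle_edges_map)
    have fj: "q = (phi g ` set (ep (fst (T!j))), phi g ` set (ep (snd (T!j))))"
      using j(2) unfolding F_def by (simp add: case_prod_beta cycle_edges_map)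
    show "fst p \<inter> fst q = {} \<and> snd p \<inter> snd q = {}"
      unfolding fi fj using disj epD[OF ti] epD[OF tj] d by simp
  qed
  have U1: "\<Union>(fst ` F ` set T) = phi g ` set (concat (map (ep \<circ> fst) T))"
    unfolding F_def by (auto simp: cycle_edges_map case_prod_beta)
  have U2: "\<Union>(snd ` F ` set T) = phi g ` set (concat (map (ep \<circ> snd) T))"
    unfolding F_def by (auto simp: cycle_edges_map case_prod_beta)
  have "set (concat (map (ep \<circ> fst) T)) = set P" "set (concat (map (ep \<circ> snd) T)) = set P"
    using tk unfolding tok_def by blast+
  then show ?thesis using P1 P2 U1 U2 unfolding good_def F_def[symmetric] by simp
qed

datatype part = PK9 nat | PU3 nat | PU2 nat nat | PLv

definition ownp :: "nat \<Rightarrow> nat \<Rightarrow> part" where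
  "ownp x y = (if x = 0 then PK9 ((y-1) div 8)
   else if (x-1) div 8 = (y-1) div 8 then
     (if (x-1) div 4 = 2*((x-1) div 8) \<and> (y-1) div 4 = (x-1) div 4 \<and> (y - x = 1 \<or> y - x = 3)
      then (if (x-1) div 8 = 0 then PLv else PU3 (((x-1) div 8 + 1) div 2))
      else PK9 ((x-1) div 8))
   else if (x-1) div 8 mod 2 = 1 \<and> (x-1) div 4 = 2*((x-1) div 8) \<and> (y-1) div 4 = 2*((x-1) div 8) + 2
     then PU3 (((x-1) div 8 + 1) div 2)
   else PU2 ((x-1) div 4) ((y-1) div 4))"

definition gK9 :: "nat \<Rightarrow> nat \<Rightarrow> nat" where "gK9 g x = (if x = 0 then 0 else 8*g + x)"
definition gU3 :: "nat \<Rightarrow> nat \<Rightarrow> nat" where "gU3 j x = (if x < 4 then 16*j - 7 + x else 16*j + 1 + (x-4))"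
definition gU2 :: "nat \<Rightarrow> nat \<Rightarrow> nat \<Rightarrow> nat" where "gU2 b b' x = (if x < 4 then 4*b + 1 + x else 4*b' + 1 + (x-4))"

lemma div4: "r < 4 \<Longrightarrow> (4*q + r) div 4 = (q::nat)" by simp
lemma div84: "r < 4 \<Longrightarrow> (4*q + r) div 8 = (q::nat) div 2"
proof -
  assume "r < 4"
  have "(4*q + r) div 8 = (4*q + r) div 4 div 2" by (simp add: div_mult2_eq[symmetric])
  then show ?thesis using \<open>r < 4\<close> by simp
qed

lemma div8: "r < 8 \<Longrightarrow> (8*q + r) div 8 = (q::nat)" by simp
lemma div8_4: "(8*q + r) div 4 = 2*(q::nat) + r div 4"
proof -
  have "8*q + r = 4*(2*q) + r" by simp
  then show ?thesis by simp
qed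

lemma own_K9:
  assumes "K9P a b"
  shows "ownp (gK9 g a) (gK9 g b) = PK9 g"
proof -
  have ab: "a < b" "b \<le> 8" "\<not> (1 \<le> a \<and> b \<le> 4 \<and> (b - a = 1 \<or> b - a = 3))"
    using assms unfolding K9P_def by auto
  define X where "X = gK9 g a"
  define Y where "Y = gK9 g b"
  have Y: "Y - 1 = 8*g + (b - 1)" unfolding Y_def gK9_def using ab by auto
  have dy: "(Y-1) div 8 = g" unfolding Y by (rule div8) (use ab in auto)
  show ?thesis
  proof (cases "a = 0")
    case True
    then have "X = 0" unfolding X_def gK9_def by simp
    then show ?thesis unfolding X_def[symmetric] Y_def[symmetric] ownp_def using dy by simp
  next
    case False
    have X: "X - 1 = 8*g + (a - 1)" "X \<noteq> 0" unfolding X_def gK9_def using False by auto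
    have dx: "(X-1) div 8 = g" unfolding X by (rule div8) (use ab in auto)
    have yx: "Y - X = b - a" unfolding X_def Y_def gK9_def using False ab by auto
    have c: "\<not> ((X-1) div 4 = 2*((X-1) div 8) \<and> (Y-1) div 4 = (X-1) div 4 \<and> (Y - X = 1 \<or> Y - X = 3))"
    proof
      assume h: "(X-1) div 4 = 2*((X-1) div 8) \<and> (Y-1) div 4 = (X-1) div 4 \<and> (Y - X = 1 \<or> Y - X = 3)"
      have d4x: "(X-1) div 4 = 2*g + (a-1) div 4" unfolding X(1) by (rule div8_4)
      have d4y: "(Y-1) div 4 = 2*g + (b-1) div 4" unfolding Y by (rule div8_4)
      have "(a - 1) div 4 = 0" "(b - 1) div 4 = 0" using h dx d4x d4y by simp_all
      then have "a \<le> 4" "b \<le> 4" by auto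
      then show False using h ab False unfolding yx by auto
    qed
    show ?thesis unfolding X_def[symmetric] Y_def[symmetric] ownp_def
      using X(2) dx dy c by auto
  qed
qed

lemma own_U3:
  assumes j: "1 \<le> j" and "U3P a b"
  shows "ownp (gU3 j a) (gU3 j b) = PU3 j"
proof -
  have ab: "a < b" "b < 8" "(a < 4 \<and> 4 \<le> b) \<or> (b < 4 \<and> (b - a = 1 \<or> b - a = 3)) \<or> (4 \<le> a \<and> (b - a = 1 \<or> b - a = 3))"
    using assms unfolding U3P_def by auto
  define X where "X = gU3 j a"
  define Y where "Y = gU3 j b"
  obtain m where m: "j = Suc m" using j by (cases j) auto
  have g1: "gU3 j x - 1 = 8*(2*m + 1) + x" if "x < 4" for x
    unfolding gU3_def m using that by simp
  have g2: "gU3 j x - 1 = 8*(2*m + 2) + (x - 4)" if "4 \<le> x" "x < 8" for x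
    unfolding gU3_def m using that by simp
  have X0: "X \<noteq> 0" unfolding X_def gU3_def m by auto
  have jj: "((2*m+1) + 1) div 2 = j" "((2*m+2) + 1) div 2 = j" unfolding m by simp_all
  consider (A) "a < 4" "4 \<le> b" | (B) "b < 4" "b - a = 1 \<or> b - a = 3" | (C) "4 \<le> a" "b - a = 1 \<or> b - a = 3"
    using ab by blast
  then show ?thesis
  proof cases
    case A
    have X: "X - 1 = 8*(2*m+1) + a" using g1 A unfolding X_def by simp
    have Y: "Y - 1 = 8*(2*m+2) + (b - 4)" using g2 A ab unfolding Y_def by simp
    have dx: "(X-1) div 8 = 2*m+1" "(X-1) div 4 = 2*(2*m+1)" unfolding X using A by (simp_all add: div8_4)
    have dy: "(Y-1) div 8 = 2*m+2" "(Y-1) div 4 = 2*(2*m+1) + 2" unfolding Y using A ab by (simp_all add: div8_4)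
    show ?thesis unfolding X_def[symmetric] Y_def[symmetric] ownp_def
      using X0 dx dy jj by simp
  next
    case B
    have X: "X - 1 = 8*(2*m+1) + a" using g1 B ab unfolding X_def by simp
    have Y: "Y - 1 = 8*(2*m+1) + b" using g1 B unfolding Y_def by simp
    have dx: "(X-1) div 8 = 2*m+1" "(X-1) div 4 = 2*(2*m+1)" unfolding X using B ab by (simp_all add: div8_4)
    have dy: "(Y-1) div 8 = 2*m+1" "(Y-1) div 4 = 2*(2*m+1)" unfolding Y using B by (simp_all add: div8_4)
    have yx: "Y - X = b - a" unfolding X_def Y_def gU3_def using B ab by auto
    show ?thesis unfolding X_def[symmetric] Y_def[symmetric] ownp_def
      using X0 dx dy jj yx B by simp
  next
    case C
    have X: "X - 1 = 8*(2*m+2) + (a - 4)" using g2 C ab unfolding X_def by simp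
    have Y: "Y - 1 = 8*(2*m+2) + (b - 4)" using g2 C ab unfolding Y_def by simp
    have dx: "(X-1) div 8 = 2*m+2" "(X-1) div 4 = 2*(2*m+2)" unfolding X using C ab by (simp_all add: div8_4)
    have dy: "(Y-1) div 8 = 2*m+2" "(Y-1) div 4 = 2*(2*m+2)" unfolding Y using C ab by (simp_all add: div8_4)
    have yx: "Y - X = b - a" unfolding X_def Y_def gU3_def using C ab by auto
    show ?thesis unfolding X_def[symmetric] Y_def[symmetric] ownp_def
      using X0 dx dy jj yx C by simp
  qed
qed

lemma own_U2:
  assumes "b < b'" "b div 2 \<noteq> b' div 2" "\<not> (b mod 4 = 2 \<and> b' = b + 2)" "U2P x y"
  shows "ownp (gU2 b b' x) (gU2 b b' y) = PU2 b b'"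
proof -
  have x: "x < 4" "4 \<le> y" "y < 8" using assms(4) unfolding U2P_def by auto
  define X where "X = gU2 b b' x"
  define Y where "Y = gU2 b b' y"
  have X: "X - 1 = 4*b + x" "X \<noteq> 0" unfolding X_def gU2_def using x by auto
  have Y: "Y - 1 = 4*b' + (y - 4)" unfolding Y_def gU2_def using x by auto
  have d1: "(X-1) div 4 = b" "(X-1) div 8 = b div 2" unfolding X using x by (simp_all add: div4 div84)
  have d2: "(Y-1) div 4 = b'" "(Y-1) div 8 = b' div 2" unfolding Y using x by (simp_all add: div4 div84)
  have c: "\<not> ((X-1) div 8 mod 2 = 1 \<and> (X-1) div 4 = 2*((X-1) div 8) \<and> (Y-1) div 4 = 2*((X-1) div 8) + 2)"
    unfolding d1 d2 using assms(3) by presburger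
  show ?thesis unfolding X_def[symmetric] Y_def[symmetric] ownp_def
    using X(2) d1 d2 c assms(2) by simp
qed

definition inI :: "nat \<Rightarrow> part \<Rightarrow> bool" where
  "inI k p = (case p of PK9 g \<Rightarrow> g \<le> 2*k | PU3 j \<Rightarrow> 1 \<le> j \<and> j \<le> k
     | PU2 b b' \<Rightarrow> b < b' \<and> b' \<le> 4*k+1 \<and> b div 2 \<noteq> b' div 2 \<and> \<not> (b mod 4 = 2 \<and> b' = b + 2)
     | PLv \<Rightarrow> False)"

definition gm :: "part \<Rightarrow> nat \<Rightarrow> nat" where
  "gm p = (case p of PK9 g \<Rightarrow> gK9 g | PU3 j \<Rightarrow> gU3 j | PU2 b b' \<Rightarrow> gU2 b b' | PLv \<Rightarrow> id)"

definition PP :: "part \<Rightarrow> nat \<Rightarrow> nat \<Rightarrow> bool" where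
  "PP p = (case p of PK9 g \<Rightarrow> K9P | PU3 j \<Rightarrow> U3P | PU2 b b' \<Rightarrow> U2P | PLv \<Rightarrow> (\<lambda>_ _. False))"

lemma decomp:
  fixes x :: nat
  assumes "0 < x"
  obtains g s r where "x - 1 = 8*g + 4*s + r" "s < 2" "r < 4" "(x-1) div 8 = g" "(x-1) div 4 = 2*g + s"
proof -
  define b where "b = (x-1) div 4"
  define r where "r = (x-1) mod 4"
  define g where "g = b div 2"
  define s where "s = b mod 2"
  have 1: "x - 1 = 4*b + r" unfolding b_def r_def by simp
  have 2: "b = 2*g + s" unfolding g_def s_def by simp
  have 3: "(x-1) div 8 = g" unfolding g_def b_def by (simp add: div_mult2_eq[symmetric])
  have 4: "x - 1 = 8*g + 4*s + r" using 1 2 by linarith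
  have 5: "s < 2" "r < 4" unfolding s_def r_def by simp_all
  have 6: "(x-1) div 4 = 2*g + s" using 2 unfolding b_def by simp
  show ?thesis by (rule that[of g s r]) (use 3 4 5 6 in auto)
qed

lemma own_cover:
  assumes xy: "x < y" "y < 16*k+9" and nl: "ownp x y \<noteq> PLv"
  shows "\<exists>p a b. inI k p \<and> PP p a b \<and> gm p a = x \<and> gm p b = y"
proof (cases "x = 0")
  case True
  obtain g s r where y: "y - 1 = 8*g + 4*s + r" "s < 2" "r < 4" "(y-1) div 8 = g" "(y-1) div 4 = 2*g + s"
    using decomp[of y] xy by auto
  have "inI k (PK9 g) \<and> PP (PK9 g) 0 (4*s+r+1) \<and> gm (PK9 g) 0 = x \<and> gm (PK9 g) (4*s+r+1) = y"
    unfolding inI_def PP_def gm_def K9P_def gK9_def using y xy True by (simp, intro conjI; linarith)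
  then show ?thesis by blast
next
  case False
  obtain g s r where x: "x - 1 = 8*g + 4*s + r" "s < 2" "r < 4" "(x-1) div 8 = g" "(x-1) div 4 = 2*g + s"
    using decomp[of x] False by auto
  obtain g' s' r' where y: "y - 1 = 8*g' + 4*s' + r'" "s' < 2" "r' < 4" "(y-1) div 8 = g'" "(y-1) div 4 = 2*g' + s'"
    using decomp[of y] xy by auto
  have gg: "g \<le> g'" using x y xy by linarith
  have own: "ownp x y = (if g = g' then
     (if s = 0 \<and> 2*g'+s' = 2*g+s \<and> (y - x = 1 \<or> y - x = 3)
      then (if g = 0 then PLv else PU3 ((g + 1) div 2)) else PK9 g)
   else if g mod 2 = 1 \<and> s = 0 \<and> 2*g'+s' = 2*g + 2 then PU3 ((g + 1) div 2)
   else PU2 (2*g+s) (2*g'+s'))"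
    unfolding ownp_def x(4,5) y(4,5) using False by simp
  show ?thesis
  proof (cases "g = g'")
    case True
    show ?thesis
    proof (cases "s = 0 \<and> s' = s \<and> (y - x = 1 \<or> y - x = 3)")
      case c4: True
      then have g0: "g \<noteq> 0" using nl own True by (auto split: if_splits)
      show ?thesis
      proof (cases "g mod 2 = 1")
        case odd: True
        define m where "m = g div 2"
        have gm2: "g = 2*m + 1" unfolding m_def using odd by presburger
        have "inI k (PU3 (m+1)) \<and> PP (PU3 (m+1)) r r' \<and> gm (PU3 (m+1)) r = x \<and> gm (PU3 (m+1)) r' = y"
          unfolding inI_def PP_def gm_def U3P_def gU3_def using x(1-3) y(1-3) xy True c4 gm2 False by auto
        then show ?thesis by blast
      next
        case even: False
        define m where "m = g div 2 - 1"
        have gm2: "g = 2*m + 2" unfolding m_def using even g0 by presburger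
        have "inI k (PU3 (m+1)) \<and> PP (PU3 (m+1)) (r+4) (r'+4) \<and> gm (PU3 (m+1)) (r+4) = x \<and> gm (PU3 (m+1)) (r'+4) = y"
          unfolding inI_def PP_def gm_def U3P_def gU3_def using x(1-3) y(1-3) xy True c4 gm2 False by auto
        then show ?thesis by blast
      qed
    next
      case nc4: False
      have "inI k (PK9 g) \<and> PP (PK9 g) (4*s+r+1) (4*s'+r'+1) \<and> gm (PK9 g) (4*s+r+1) = x \<and> gm (PK9 g) (4*s'+r'+1) = y"
        unfolding inI_def PP_def gm_def K9P_def gK9_def using x(1-3) y(1-3) xy True nc4 False by auto
      then show ?thesis by blast
    qed
  next
    case ng: False
    show ?thesis
    proof (cases "g mod 2 = 1 \<and> s = 0 \<and> 2*g'+s' = 2*g + 2")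
      case True
      define m where "m = g div 2"
      have gm2: "g = 2*m + 1" unfolding m_def using True by presburger
      have g': "g' = g + 1 \<and> s' = 0" using True y(2) by presburger
      have "inI k (PU3 (m+1)) \<and> PP (PU3 (m+1)) r (r'+4) \<and> gm (PU3 (m+1)) r = x \<and> gm (PU3 (m+1)) (r'+4) = y"
        unfolding inI_def PP_def gm_def U3P_def gU3_def using x(1-3) y(1-3) xy True gm2 g' False by auto
      then show ?thesis by blast
    next
      case nu: False
      have d1: "(2*g+s) div 2 = g" "(2*g'+s') div 2 = g'" using x(2) y(2) by auto
      have m4: "(2*g+s) mod 4 = 2 \<Longrightarrow> g mod 2 = 1 \<and> s = 0" using x(2) by presburger
      have "inI k (PU2 (2*g+s) (2*g'+s')) \<and> PP (PU2 (2*g+s) (2*g'+s')) r (r'+4) \<and> gm (PU2 (2*g+s) (2*g'+s')) r = x \<and> gm (PU2 (2*g+s) (2*g'+s')) (r'+4) = y"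
        unfolding inI_def PP_def gm_def U2P_def gU2_def part.case d1 using x(1-3) y(1-3) xy nu ng False gg m4 by auto
      then show ?thesis by blast
    qed
  qed
qed

definition NN :: "part \<Rightarrow> nat" where "NN p = (case p of PK9 _ \<Rightarrow> 9 | _ \<Rightarrow> 8)"
definition TT :: "part \<Rightarrow> (nat list \<times> nat list) list" where
  "TT p = (case p of PK9 _ \<Rightarrow> TK9 | PU3 _ \<Rightarrow> TU3 | PU2 _ _ \<Rightarrow> TU2 | PLv \<Rightarrow> [])"

lemma gm_mono:
  assumes "inI k p" "a < b" "b < NN p"
  shows "gm p a < gm p b"
  using assms by (cases p) (auto simp: inI_def gm_def NN_def gK9_def gU3_def gU2_def)

lemma gm_range:
  assumes "inI k p" "a < NN p"
  shows "gm p a < 16*k+9"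
  using assms by (cases p) (auto simp: inI_def gm_def NN_def gK9_def gU3_def gU2_def)

lemma gm_inj:
  assumes "inI k p"
  shows "inj_on (gm p) {..<NN p}"
proof (rule inj_onI)
  fix a b assume "a \<in> {..<NN p}" "b \<in> {..<NN p}" "gm p a = gm p b"
  then show "a = b" using gm_mono[OF assms, of a b] gm_mono[OF assms, of b a]
    by (cases a b rule: linorder_cases) auto
qed

lemma PP_bound: "PP p a b \<Longrightarrow> a < b \<and> b < NN p"
  by (cases p) (auto simp: PP_def NN_def K9P_def U3P_def U2P_def)

lemma tok_p: "inI k p \<Longrightarrow> tok (TT p) (NN p) (filter (\<lambda>(a,b). PP p a b) (allpairs (NN p)))"
  by (cases p) (simp_all add: inI_def TT_def NN_def PP_def tok_K9 tok_U3 tok_U2)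

definition Sp :: "part \<Rightarrow> (nat set set \<times> nat set set) set" where
  "Sp p = (\<lambda>(vs,ws). (cycle_edges (map (gm p) vs), cycle_edges (map (gm p) ws))) ` set (TT p)"
definition Ep :: "part \<Rightarrow> nat set set" where
  "Ep p = phi (gm p) ` {(a,b). PP p a b}"

lemma good_p:
  assumes "inI k p"
  shows "good {..<16*k+9} (Sp p) (Ep p)"
proof -
  have s: "set (filter (\<lambda>(a,b). PP p a b) (allpairs (NN p))) = {(a,b). PP p a b}"
    by (rule set_filter_allpairs) (rule PP_bound)
  have r: "gm p ` {..<NN p} \<subseteq> {..<16*k+9}" using gm_range[OF assms] by auto
  show ?thesis using inst_good[OF tok_p[OF assms] gm_inj[OF assms] r] unfolding s Sp_def Ep_def .
qed

definition own :: "nat set \<Rightarrow> part" where "own e = ownp (Min e) (Max e)"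

lemma own_pair: "(x::nat) < y \<Longrightarrow> own {x,y} = ownp x y"
  unfolding own_def by (simp add: min_def max_def)

lemma R2:
  assumes "inI k p" "PP p a b"
  shows "own {gm p a, gm p b} = p \<and> {gm p a, gm p b} \<in> complete_edges {..<16*k+9}"
proof -
  have ab: "a < b" "b < NN p" using PP_bound[OF assms(2)] by auto
  have lt: "gm p a < gm p b" using gm_mono[OF assms(1) ab] .
  have rg: "gm p a < 16*k+9" "gm p b < 16*k+9" using gm_range[OF assms(1)] ab by auto
  have "ownp (gm p a) (gm p b) = p"
    using assms by (cases p) (auto simp: inI_def PP_def gm_def intro: own_K9 own_U3 own_U2)
  moreover have "{gm p a, gm p b} \<in> complete_edges {..<16*k+9}"
    unfolding complete_edges_def using rg less_imp_neq[OF lt] by blast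
  ultimately show ?thesis using own_pair[OF lt] by simp
qed

definition L0 :: "nat set set" where "L0 = {{1,2},{2,3},{3,4},{1,4}}"

lemma R4:
  assumes "(x::nat) < y"
  shows "ownp x y = PLv \<longleftrightarrow> {x,y} \<in> L0"
proof
  assume h: "ownp x y = PLv"
  then have x0: "x \<noteq> 0" unfolding ownp_def by (auto split: if_splits)
  have c: "(x-1) div 8 = 0" "(x-1) div 4 = 0" "(y-1) div 4 = 0" "y - x = 1 \<or> y - x = 3"
    using h x0 unfolding ownp_def by (auto split: if_splits)
  then have "x \<le> 4" "y \<le> 4" by auto
  then show "{x,y} \<in> L0" using x0 c(4) assms unfolding L0_def by (auto simp: doubleton_eq_iff)
next
  assume "{x,y} \<in> L0"
  then have "(x,y) \<in> {(1,2),(2,3),(3,4),(1,4)}" using assms unfolding L0_def by (auto simp: doubleton_eq_iff)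
  then show "ownp x y = PLv" unfolding ownp_def by auto
qed

lemma CE_eq: "complete_edges X = {B. B \<subseteq> X \<and> card B = 2}"
  unfolding complete_edges_def by (auto simp: card_2_iff)

lemma card_CE: "finite X \<Longrightarrow> card (complete_edges X) = card X choose 2"
  unfolding CE_eq by (rule n_subsets)

lemma finite_CE: "finite X \<Longrightarrow> finite (complete_edges X)"
  unfolding CE_eq by (rule finite_subset[of _ "Pow X"]) auto

lemma mod8_aux: "(i::nat) < 8 \<Longrightarrow> j < 8 \<Longrightarrow> i = (j+1) mod 8 \<Longrightarrow> (i+1) mod 8 = j \<Longrightarrow> False"
proof -
  assume a: "i < 8" "j < 8" "i = (j+1) mod 8" "(i+1) mod 8 = j"
  show False
  proof (cases "j = 7")
    case True then show False using a by simp
  next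
    case f7: False
    show False
    proof (cases "j = 6")
      case True then show False using a by simp
    next
      case False
      then have "i = j + 1" using a f7 by simp
      then show False using a f7 False by simp
    qed
  qed
qed

lemma cycle_props:
  assumes "is_8cycle X c"
  shows "c \<subseteq> complete_edges X \<and> card c = 8"
proof -
  obtain vs where vs: "length vs = 8" "distinct vs" "set vs \<subseteq> X" "c = cycle_edges vs"
    using assms unfolding is_8cycle_def by blast
  have ce: "c = (\<lambda>i. {vs!i, vs!((i+1) mod 8)}) ` {..<8}"
    unfolding vs(4) cycle_edges_def vs(1) by (auto simp: setcompr_eq_image lessThan_def)
  have ne: "vs!i \<noteq> vs!((i+1) mod 8)" if "i < 8" for i
  proof -
    have "i \<noteq> (i+1) mod 8" using that by (cases "i = 7") auto
    then show ?thesis using vs(1,2) that by (simp add: nth_eq_iff_index_eq)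
  qed
  have sub: "c \<subseteq> complete_edges X"
  proof
    fix e assume "e \<in> c"
    then obtain i where i: "i < 8" "e = {vs!i, vs!((i+1) mod 8)}" using ce by auto
    have "vs!i \<in> X" "vs!((i+1) mod 8) \<in> X" using vs(1,3) i(1) nth_mem by (metis mod_less_divisor subsetD zero_less_numeral)+
    then show "e \<in> complete_edges X" unfolding complete_edges_def using i ne by blast
  qed
  have inj: "inj_on (\<lambda>i. {vs!i, vs!((i+1) mod 8)}) {..<8}"
  proof (rule inj_onI)
    fix i j assume i: "i \<in> {..<8}" and j: "j \<in> {..<8}" and e: "{vs!i, vs!((i+1) mod 8)} = {vs!j, vs!((j+1) mod 8)}"
    have iff: "a < 8 \<Longrightarrow> b < 8 \<Longrightarrow> (vs!a = vs!b) = (a = b)" for a b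
      using vs(1,2) by (simp add: nth_eq_iff_index_eq)
    have m: "(i+1) mod 8 < 8" "(j+1) mod 8 < 8" by simp_all
    from e have "(vs!i = vs!j \<and> vs!((i+1) mod 8) = vs!((j+1) mod 8)) \<or> (vs!i = vs!((j+1) mod 8) \<and> vs!((i+1) mod 8) = vs!j)"
      by (auto simp: doubleton_eq_iff)
    then have "i = j \<or> (i = (j+1) mod 8 \<and> (i+1) mod 8 = j)"
      using iff[of i j] iff[of i "(j+1) mod 8"] iff[of "(i+1) mod 8" j] i j m by auto
    moreover have "i < 8" "j < 8" using i j by auto
    ultimately show "i = j" using mod8_aux by blast
  qed
  have "card c = 8" unfolding ce using card_image[OF inj] by simp
  then show ?thesis using sub by blast
qed

lemma lower_bound:
  fixes n :: nat
  assumes n: "n mod 16 = 9" and pk: "cycle8_packing {..<n} C L"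
  shows "4 \<le> card L"
proof -
  let ?E = "complete_edges {..<n}"
  have fE: "finite ?E" by (rule finite_CE) simp
  have all: "\<forall>c\<in>C. is_8cycle {..<n} c" using pk unfolding cycle8_packing_def by (rule conjunct1)
  have cyc: "c \<subseteq> ?E \<and> card c = 8" if "c \<in> C" for c
    using all that by (intro cycle_props) simp
  have fC: "finite C" using cyc by (intro finite_subset[of C "Pow ?E"]) (use fE in auto)
  have "\<forall>c1\<in>C. \<forall>c2\<in>C. c1 \<noteq> c2 \<longrightarrow> c1 \<inter> c2 = {}" using pk unfolding cycle8_packing_def by (elim conjE) assumption
  then have disj: "pairwise disjnt C" unfolding pairwise_def disjnt_def by blast
  have fc: "\<And>c. c \<in> C \<Longrightarrow> finite c" using cyc fE finite_subset by blast
  have cU: "card (\<Union>C) = 8 * card C"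
    using card_Union_disjoint[OF disj fc] cyc by simp
  have sub: "\<Union>C \<subseteq> ?E" using cyc by blast
  have L: "L = ?E - \<Union>C" using pk unfolding cycle8_packing_def by (elim conjE) assumption
  have cL: "card L = card ?E - 8 * card C" unfolding L card_Diff_subset[OF finite_subset[OF sub fE] sub] cU ..
  have le: "8 * card C \<le> card ?E" unfolding cU[symmetric] by (rule card_mono[OF fE sub])
  obtain k where k: "n = 16*k + 9" using n by (metis mod_div_mult_eq add.commute mult.commute)
  have "card ?E = n * (n - 1) div 2" by (simp add: card_CE choose_two)
  also have "n * (n - 1) = 2 * (8 * (16*k*k + 17*k + 4) + 4)" unfolding k by (simp add: algebra_simps)
  finally have cE: "card ?E = 8 * (16*k*k + 17*k + 4) + 4" by simp
  show ?thesis using cL le unfolding cE by presburger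
qed

theorem main:
  fixes n :: nat
  assumes "n mod 16 = 9"
  shows "\<exists>C L. max_cycle8_packing {..<n} C L \<and> almost_2_perfect {..<n} C L"
proof -
  obtain k where k: "n = 16*k + 9" using assms by (metis mod_div_mult_eq add.commute mult.commute)
  let ?X = "{..<16*k+9}"
  let ?I = "{p. inI k p}"
  let ?S = "\<Union>p\<in>?I. Sp p"
  have g: "good ?X ?S (\<Union>p\<in>?I. Ep p)"
  proof (rule good_UN)
    show "\<And>p. p \<in> ?I \<Longrightarrow> good ?X (Sp p) (Ep p)" using good_p by blast
    show "Ep p \<inter> Ep q = {}" if "p \<in> ?I" "q \<in> ?I" "p \<noteq> q" for p q
    proof (rule ccontr)
      assume "Ep p \<inter> Ep q \<noteq> {}"
      then obtain e where "e \<in> Ep p" "e \<in> Ep q" by blast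
      then obtain a b a' b' where h: "PP p a b" "e = {gm p a, gm p b}" "PP q a' b'" "e = {gm q a', gm q b'}"
        unfolding Ep_def phi_def by auto
      have "own e = p" using R2[of k p a b] that(1) h(1,2) by simp
      moreover have "own e = q" using R2[of k q a' b'] that(2) h(3,4) by simp
      ultimately have "p = q" by simp
      then show False using that by simp
    qed
  qed
  have ce2: "{x,y} \<in> complete_edges ?X" if "x < 16*k+9" "y < 16*k+9" "x \<noteq> y" for x y
    unfolding complete_edges_def using that by blast
  have L0sub: "L0 \<subseteq> complete_edges ?X" unfolding L0_def using ce2 by simp
  have EU: "(\<Union>p\<in>?I. Ep p) = complete_edges ?X - L0"
  proof
    show "(\<Union>p\<in>?I. Ep p) \<subseteq> complete_edges ?X - L0"
    proof
      fix e assume "e \<in> (\<Union>p\<in>?I. Ep p)"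
      then obtain p a b where p: "inI k p" "PP p a b" "e = {gm p a, gm p b}" unfolding Ep_def phi_def by auto
      have R: "own e = p" "e \<in> complete_edges ?X" using R2[OF p(1,2)] p(3) by auto
      have lt: "gm p a < gm p b" using gm_mono[OF p(1)] PP_bound[OF p(2)] by auto
      have "e \<notin> L0"
      proof
        assume "e \<in> L0"
        then have "ownp (gm p a) (gm p b) = PLv" using R4[OF lt] p(3) by simp
        then have "p = PLv" using R(1) own_pair[OF lt] p(3) by simp
        then show False using p(1) unfolding inI_def by simp
      qed
      then show "e \<in> complete_edges ?X - L0" using R by blast
    qed
    show "complete_edges ?X - L0 \<subseteq> (\<Union>p\<in>?I. Ep p)"
    proof
      fix e assume e: "e \<in> complete_edges ?X - L0"
      then obtain x y where xy: "e = {x,y}" "x < y" "y < 16*k+9"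
        unfolding complete_edges_def by (auto simp: insert_commute) (metis insert_commute linorder_neqE_nat)
      have "ownp x y \<noteq> PLv" using R4[OF xy(2)] e xy(1) by auto
      then obtain p a b where p: "inI k p" "PP p a b" "gm p a = x" "gm p b = y"
        using own_cover[OF xy(2,3)] by blast
      have "e \<in> Ep p" unfolding Ep_def phi_def using p xy(1) by (auto simp: image_iff)
      then show "e \<in> (\<Union>p\<in>?I. Ep p)" using p(1) by blast
    qed
  qed
  have fin: "cycle8_packing ?X (fst ` ?S) L0 \<and> almost_2_perfect ?X (fst ` ?S) L0"
    using good_final[OF g[unfolded EU] L0sub] .
  have cL0: "card L0 = 4" unfolding L0_def by (simp add: doubleton_eq_iff)
  have mx: "max_cycle8_packing ?X (fst ` ?S) L0"
    unfolding max_cycle8_packing_def using fin lower_bound[of "16*k+9"] cL0 by simp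
  show ?thesis unfolding k using mx fin by blast
qed

theorem lemma3p5:
  fixes n :: nat
  assumes "n mod 16 = 9"
  shows "\<exists>C L. max_cycle8_packing {..<n} C L \<and> almost_2_perfect {..<n} C L"
  using assms by (rule main)

end
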